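(* Let $L,N,K$ be finite simplicial complexes, let $\varphi: L\to N$ and $\psi: N\to K$ be surjective simplicial finite-fibrations, and let $n\ge2$. Then $\mathrm{TC}_n(\psi\circ\varphi)\le\min\{\mathrm{TC}_n(\varphi),\mathrm{TC}_n(\psi)\}$.
   Context: Simplicial complexes are abstract and edge-path connected; $X^n$ is the $n$-fold categorical product (vertex set $\mathrm{VX}(X)^n$; a set of vertices is a simplex iff each coordinate projection is a simplex). Simplicial maps $f,g: X\to Y$ are contiguous if $f(\sigma)\cup g(\sigma)$ is a simplex for every simplex $\sigma$; $f\sim g$ if joined by a finite chain of contiguous simplicial maps. $\mathrm{SD}(\varphi_1,\dots,\varphi_m)$ for simplicial maps $X\to Y$ is the least $k\ge0$ such that $X$ is a union of subcomplexes $X_0,\dots,X_k$ with $\varphi_i|_{X_j}\sim\varphi_l|_{X_j}$ for all $i,l,j$. For a surjective simplicial finite-fibration $\phi: X\to Y$, $\mathrm{TC}_n(\phi)=\mathrm{SD}(\phi\circ p_1,\dots,\phi\circ p_n)$ where $p_i: X^n\to X$ are the projections. $I_m$ is the complex with vertices $0,\dots,m$ and edges $\{i,i+1\}$; $\phi: X\to Y$ is a simplicial finite-fibration if for every finite complex $M$, $m\ge1$, inclusion $i: M\times\{0\}\to M\times I_m$ and simplicial $g: M\times\{0\}\to X$, $G: M\times I_m\to Y$ with $\phi\circ g=G\circ i$, there is simplicial $\widetilde G: M\times I_m\to X$ with $\widetilde G\circ i=g$, $\phi\circ\widetilde G=G$. *)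

theory Defs
  imports Main
begin

definition vertices :: "'a set set \<Rightarrow> 'a set" where
  "vertices X = \<Union>X"

definition is_complex :: "'a set set \<Rightarrow> bool" where
  "is_complex X \<longleftrightarrow> (\<forall>\<sigma>\<in>X. finite \<sigma> \<and> \<sigma> \<noteq> {}) \<and>
     (\<forall>\<sigma>\<in>X. \<forall>\<tau>. \<tau> \<subseteq> \<sigma> \<and> \<tau> \<noteq> {} \<longrightarrow> \<tau> \<in> X)"

definition edge_path_connected :: "'a set set \<Rightarrow> bool" where
  "edge_path_connected X \<longleftrightarrow> vertices X \<noteq> {} \<and>
     (\<forall>u\<in>vertices X. \<forall>v\<in>vertices X. (u, v) \<in> {(x, y). {x, y} \<in> X}\<^sup>*)"

definition finite_complex :: "'a set set \<Rightarrow> bool" where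
  "finite_complex X \<longleftrightarrow> is_complex X \<and> finite (vertices X)"

definition simplicial_map :: "'a set set \<Rightarrow> 'b set set \<Rightarrow> ('a \<Rightarrow> 'b) \<Rightarrow> bool" where
  "simplicial_map X Y f \<longleftrightarrow> (\<forall>\<sigma>\<in>X. f ` \<sigma> \<in> Y)"

definition contiguous :: "'a set set \<Rightarrow> 'b set set \<Rightarrow> ('a \<Rightarrow> 'b) \<Rightarrow> ('a \<Rightarrow> 'b) \<Rightarrow> bool" where
  "contiguous X Y f g \<longleftrightarrow> (\<forall>\<sigma>\<in>X. f ` \<sigma> \<union> g ` \<sigma> \<in> Y)"

text \<open>Contiguity class: joined by a finite chain of contiguous simplicial maps
  (maps are only compared on vertices).\<close>
definition same_contiguity_class ::
  "'a set set \<Rightarrow> 'b set set \<Rightarrow> ('a \<Rightarrow> 'b) \<Rightarrow> ('a \<Rightarrow> 'b) \<Rightarrow> bool" where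
  "same_contiguity_class X Y f g \<longleftrightarrow>
     (\<exists>(h :: nat \<Rightarrow> 'a \<Rightarrow> 'b) k.
        (\<forall>i\<le>k. simplicial_map X Y (h i)) \<and>
        (\<forall>v\<in>vertices X. h 0 v = f v \<and> h k v = g v) \<and>
        (\<forall>i<k. contiguous X Y (h i) (h (Suc i))))"

definition subcomplex :: "'a set set \<Rightarrow> 'a set set \<Rightarrow> bool" where
  "subcomplex A X \<longleftrightarrow> is_complex A \<and> A \<subseteq> X"

definition SD :: "'a set set \<Rightarrow> 'b set set \<Rightarrow> 'i set \<Rightarrow> ('i \<Rightarrow> 'a \<Rightarrow> 'b) \<Rightarrow> nat" where
  "SD X Y I \<phi> = (LEAST k. \<exists>A :: nat \<Rightarrow> 'a set set.
      (\<forall>j\<le>k. subcomplex (A j) X) \<and> (\<Union>j\<le>k. A j) = X \<and>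
      (\<forall>i\<in>I. \<forall>l\<in>I. \<forall>j\<le>k. same_contiguity_class (A j) Y (\<phi> i) (\<phi> l)))"

text \<open>n-fold categorical product; vertices are lists of length n.\<close>
definition cpow :: "'a set set \<Rightarrow> nat \<Rightarrow> 'a list set set" where
  "cpow X n = {S. S \<noteq> {} \<and> (\<forall>v\<in>S. length v = n) \<and> (\<forall>i<n. (\<lambda>v. v ! i) ` S \<in> X)}"

definition cprod :: "'a set set \<Rightarrow> 'b set set \<Rightarrow> ('a \<times> 'b) set set" where
  "cprod M P = {S. S \<noteq> {} \<and> fst ` S \<in> M \<and> snd ` S \<in> P}"

definition interval_complex :: "nat \<Rightarrow> nat set set" where
  "interval_complex m = {{i} | i. i \<le> m} \<union> {{i, Suc i} | i. i < m}"

text \<open>Simplicial finite-fibration; test complexes M are taken with vertices in nat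
  (every finite complex is isomorphic to one of these).\<close>
definition finite_fibration :: "'a set set \<Rightarrow> 'b set set \<Rightarrow> ('a \<Rightarrow> 'b) \<Rightarrow> bool" where
  "finite_fibration X Y \<phi> \<longleftrightarrow> simplicial_map X Y \<phi> \<and>
    (\<forall>(M :: nat set set) m (g :: nat \<times> nat \<Rightarrow> 'a) (G :: nat \<times> nat \<Rightarrow> 'b).
       finite_complex M \<and> m \<ge> 1 \<and>
       simplicial_map (cprod M {{0}}) X g \<and>
       simplicial_map (cprod M (interval_complex m)) Y G \<and>
       (\<forall>v\<in>vertices (cprod M {{0}}). \<phi> (g v) = G v) \<longrightarrow>
       (\<exists>Gt :: nat \<times> nat \<Rightarrow> 'a.
          simplicial_map (cprod M (interval_complex m)) X Gt \<and>
          (\<forall>v\<in>vertices (cprod M {{0}}). Gt v = g v) \<and>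
          (\<forall>v\<in>vertices (cprod M (interval_complex m)). \<phi> (Gt v) = G v)))"

definition TC :: "nat \<Rightarrow> 'a set set \<Rightarrow> 'b set set \<Rightarrow> ('a \<Rightarrow> 'b) \<Rightarrow> nat" where
  "TC n X Y \<phi> = SD (cpow X n) Y {..<n} (\<lambda>i v. \<phi> (v ! i))"

end

theory Submission
  imports Defs
begin

lemma contig_cong:
  assumes "\<forall>v\<in>vertices X. f v = f' v" "contiguous X Y f g"
  shows "contiguous X Y f' g"
  unfolding contiguous_def
proof
  fix \<sigma> assume s: "\<sigma> \<in> X"
  hence "\<sigma> \<subseteq> vertices X" by (auto simp: vertices_def)
  hence "f' ` \<sigma> = f ` \<sigma>" using assms(1) by (intro image_cong) auto
  thus "f' ` \<sigma> \<union> g ` \<sigma> \<in> Y" using assms(2) s by (simp add: contiguous_def)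
qed

lemma class_cong:
  assumes "same_contiguity_class X Y f g"
    "\<forall>v\<in>vertices X. f v = f' v" "\<forall>v\<in>vertices X. g v = g' v"
  shows "same_contiguity_class X Y f' g'"
  using assms unfolding same_contiguity_class_def by metis

lemma class_trans:
  assumes "same_contiguity_class X Y f m" "same_contiguity_class X Y m g"
  shows "same_contiguity_class X Y f g"
proof -
  obtain h1 k1 where h1: "\<forall>i\<le>k1. simplicial_map X Y (h1 i)"
    "\<forall>v\<in>vertices X. h1 0 v = f v \<and> h1 k1 v = m v"
    "\<forall>i<k1. contiguous X Y (h1 i) (h1 (Suc i))"
    using assms(1) unfolding same_contiguity_class_def by blast
  obtain h2 k2 where h2: "\<forall>i\<le>k2. simplicial_map X Y (h2 i)"
    "\<forall>v\<in>vertices X. h2 0 v = m v \<and> h2 k2 v = g v"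
    "\<forall>i<k2. contiguous X Y (h2 i) (h2 (Suc i))"
    using assms(2) unfolding same_contiguity_class_def by blast
  define h where "h i = (if i \<le> k1 then h1 i else h2 (i - k1))" for i
  have "\<forall>i\<le>k1+k2. simplicial_map X Y (h i)"
    using h1(1) h2(1) by (auto simp: h_def)
  moreover have "\<forall>v\<in>vertices X. h 0 v = f v \<and> h (k1+k2) v = g v"
    using h1(2) h2(2) by (auto simp: h_def)
  moreover have "\<forall>i<k1+k2. contiguous X Y (h i) (h (Suc i))"
  proof (intro allI impI)
    fix i assume i: "i < k1 + k2"
    consider "i < k1" | "i = k1" | "i > k1" by linarith
    thus "contiguous X Y (h i) (h (Suc i))"
    proof cases
      case 1 thus ?thesis using h1(3) by (simp add: h_def)
    next
      case 2
      have "contiguous X Y (h2 0) (h2 (Suc 0))" using h2(3) i 2 by simp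
      moreover have "\<forall>v\<in>vertices X. h2 0 v = h1 k1 v" using h1(2) h2(2) by simp
      ultimately have "contiguous X Y (h1 k1) (h2 (Suc 0))" by (rule contig_cong[rotated])
      thus ?thesis using 2 by (simp add: h_def)
    next
      case 3
      hence "Suc i - k1 = Suc (i - k1)" by simp
      thus ?thesis using h2(3) 3 i by (simp add: h_def)
    qed
  qed
  ultimately show ?thesis unfolding same_contiguity_class_def by blast
qed

lemma contig_class:
  assumes "simplicial_map X Y f" "simplicial_map X Y g" "contiguous X Y f g"
  shows "same_contiguity_class X Y f g"
  unfolding same_contiguity_class_def
  apply (rule exI[of _ "\<lambda>i. if i = 0 then f else g"], rule exI[of _ 1])
  using assms by (simp add: le_Suc_eq)

lemma cx_fin: "is_complex X \<Longrightarrow> \<sigma> \<in> X \<Longrightarrow> finite \<sigma> \<and> \<sigma> \<noteq> {}"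
  unfolding is_complex_def by blast

lemma cx_sub: "is_complex X \<Longrightarrow> \<sigma> \<in> X \<Longrightarrow> \<tau> \<subseteq> \<sigma> \<Longrightarrow> \<tau> \<noteq> {} \<Longrightarrow> \<tau> \<in> X"
  unfolding is_complex_def by blast

definition faces :: "'a set \<Rightarrow> 'a set set" where
  "faces \<sigma> = {\<tau>. \<tau> \<subseteq> \<sigma> \<and> \<tau> \<noteq> {}}"

lemma core:
  assumes X: "is_complex X" and Y: "is_complex Y" and C: "edge_path_connected Y"
    and s: "\<sigma> \<in> X" and f: "simplicial_map X Y f" and g: "simplicial_map X Y g"
  shows "same_contiguity_class (faces \<sigma>) Y f g"
proof -
  have sne: "\<sigma> \<noteq> {}" "finite \<sigma>" using cx_fin[OF X s] by auto
  have fX: "faces \<sigma> \<subseteq> X" using cx_sub[OF X s] by (auto simp: faces_def)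
  have vf: "vertices (faces \<sigma>) = \<sigma>" using sne by (auto simp: vertices_def faces_def)
  have sub: "\<And>S T. T \<in> Y \<Longrightarrow> S \<subseteq> T \<Longrightarrow> S \<noteq> {} \<Longrightarrow> S \<in> Y"
    using cx_sub[OF Y] by blast
  have ff: "simplicial_map (faces \<sigma>) Y f" using f fX by (auto simp: simplicial_map_def)
  have gf: "simplicial_map (faces \<sigma>) Y g" using g fX by (auto simp: simplicial_map_def)
  have constS: "simplicial_map (faces \<sigma>) Y (\<lambda>_. a)" if av: "a \<in> vertices Y" for a
  proof -
    obtain T where "T \<in> Y" "a \<in> T" using av by (auto simp: vertices_def)
    hence "{a} \<in> Y" using sub[of T "{a}"] by auto
    thus ?thesis by (auto simp: simplicial_map_def faces_def image_constant_conv)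
  qed
  obtain v0 where v0: "v0 \<in> \<sigma>" using sne by auto
  have fs: "f ` \<sigma> \<in> Y" "g ` \<sigma> \<in> Y" using f g s by (auto simp: simplicial_map_def)
  have fv: "f v0 \<in> vertices Y" "g v0 \<in> vertices Y" using fs v0 by (auto simp: vertices_def)
  have c1: "same_contiguity_class (faces \<sigma>) Y f (\<lambda>_. f v0)"
  proof (rule contig_class[OF ff constS[OF fv(1)]])
    show "contiguous (faces \<sigma>) Y f (\<lambda>_. f v0)"
      unfolding contiguous_def faces_def
    proof clarify
      fix \<tau> assume "\<tau> \<subseteq> \<sigma>" "\<tau> \<noteq> {}"
      thus "f ` \<tau> \<union> (\<lambda>_. f v0) ` \<tau> \<in> Y" using v0 by (intro sub[OF fs(1)]) (auto simp: image_constant_conv)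
    qed
  qed
  have c3: "same_contiguity_class (faces \<sigma>) Y (\<lambda>_. g v0) g"
  proof (rule contig_class[OF constS[OF fv(2)] gf])
    show "contiguous (faces \<sigma>) Y (\<lambda>_. g v0) g"
      unfolding contiguous_def faces_def
    proof clarify
      fix \<tau> assume "\<tau> \<subseteq> \<sigma>" "\<tau> \<noteq> {}"
      thus "(\<lambda>_. g v0) ` \<tau> \<union> g ` \<tau> \<in> Y" using v0 by (intro sub[OF fs(2)]) (auto simp: image_constant_conv)
    qed
  qed
  have path: "(f v0, g v0) \<in> {(x, y). {x, y} \<in> Y}\<^sup>*" using C fv
    by (auto simp: edge_path_connected_def)
  have c2: "same_contiguity_class (faces \<sigma>) Y (\<lambda>_. f v0) (\<lambda>_. b)" if "(f v0, b) \<in> {(x, y). {x, y} \<in> Y}\<^sup>*" for b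
    using that
  proof (induction rule: rtrancl_induct)
    case base
    show ?case by (rule contig_class[OF constS[OF fv(1)] constS[OF fv(1)]])
         (use constS[OF fv(1)] in \<open>auto simp: contiguous_def simplicial_map_def faces_def image_constant_conv\<close>)
  next
    case (step y z)
    hence yz: "{y, z} \<in> Y" by simp
    hence yv: "y \<in> vertices Y" "z \<in> vertices Y" by (auto simp: vertices_def)
    have "contiguous (faces \<sigma>) Y (\<lambda>_. y) (\<lambda>_. z)"
      unfolding contiguous_def faces_def
    proof clarify
      fix \<tau> :: "'a set" assume "\<tau> \<subseteq> \<sigma>" "\<tau> \<noteq> {}"
      hence "(\<lambda>_. y) ` \<tau> \<union> (\<lambda>_. z) ` \<tau> = {y, z}" by auto
      thus "(\<lambda>_. y) ` \<tau> \<union> (\<lambda>_. z) ` \<tau> \<in> Y" using yz by simp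
    qed
    hence "same_contiguity_class (faces \<sigma>) Y (\<lambda>_. y) (\<lambda>_. z)"
      by (rule contig_class[OF constS[OF yv(1)] constS[OF yv(2)]])
    thus ?case using step.IH class_trans by blast
  qed
  show ?thesis using class_trans[OF c1 class_trans[OF c2[OF path] c3]] .
qed

lemma faces_sub:
  assumes X: "is_complex X" and s: "\<sigma> \<in> X"
  shows "subcomplex (faces \<sigma>) X"
proof -
  have "finite \<sigma>" using cx_fin[OF X s] by auto
  hence "is_complex (faces \<sigma>)" unfolding is_complex_def faces_def
    by (auto intro: finite_subset)
  moreover have "faces \<sigma> \<subseteq> X" using cx_sub[OF X s] by (auto simp: faces_def)
  ultimately show ?thesis by (simp add: subcomplex_def)
qed

lemma class_empty: "same_contiguity_class {} Y f g"
  unfolding same_contiguity_class_def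
  by (rule exI[of _ "\<lambda>_. f"], rule exI[of _ 0]) (auto simp: simplicial_map_def vertices_def)

lemma SD_ex:
  assumes X: "is_complex X" "finite X" and Y: "is_complex Y" "edge_path_connected Y"
    and f: "\<forall>i\<in>I. simplicial_map X Y (\<phi> i)"
  shows "\<exists>(k::nat) A. (\<forall>j\<le>k. subcomplex (A j) X) \<and> (\<Union>j\<le>k. A j) = X \<and>
      (\<forall>i\<in>I. \<forall>l\<in>I. \<forall>j\<le>k. same_contiguity_class (A j) Y (\<phi> i) (\<phi> l))"
proof -
  obtain xs where xs: "set xs = X" using finite_list[OF X(2)] by blast
  define A where "A j = (if j < length xs then faces (xs ! j) else {})" for j
  have "\<forall>j\<le>length xs. subcomplex (A j) X"
  proof (intro allI impI)
    fix j assume "j \<le> length xs"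
    show "subcomplex (A j) X"
    proof (cases "j < length xs")
      case True
      hence "xs ! j \<in> X" using xs by auto
      thus ?thesis using faces_sub[OF X(1)] True by (simp add: A_def)
    next
      case False thus ?thesis by (simp add: A_def subcomplex_def is_complex_def)
    qed
  qed
  moreover have "(\<Union>j\<le>length xs. A j) = X"
  proof
    show "(\<Union>j\<le>length xs. A j) \<subseteq> X" using calculation by (auto simp: subcomplex_def)
    show "X \<subseteq> (\<Union>j\<le>length xs. A j)"
    proof
      fix \<sigma> assume s: "\<sigma> \<in> X"
      then obtain j where j: "j < length xs" "xs ! j = \<sigma>" using xs by (auto simp: in_set_conv_nth)
      have "\<sigma> \<noteq> {}" using cx_fin[OF X(1) s] by auto
      hence "\<sigma> \<in> A j" using j by (simp add: A_def faces_def)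
      thus "\<sigma> \<in> (\<Union>j\<le>length xs. A j)" using j by auto
    qed
  qed
  moreover have "\<forall>i\<in>I. \<forall>l\<in>I. \<forall>j\<le>length xs. same_contiguity_class (A j) Y (\<phi> i) (\<phi> l)"
  proof (intro ballI allI impI)
    fix i l j assume il: "i \<in> I" "l \<in> I" and "j \<le> length xs"
    show "same_contiguity_class (A j) Y (\<phi> i) (\<phi> l)"
    proof (cases "j < length xs")
      case True
      hence "xs ! j \<in> X" using xs by auto
      thus ?thesis using core[OF X(1) Y _ ] f il True by (simp add: A_def)
    next
      case False thus ?thesis by (simp add: A_def class_empty)
    qed
  qed
  ultimately show ?thesis by (intro exI[of _ "length xs"] exI[of _ A]) blast
qed

lemma cpow_fin:
  assumes X: "is_complex X" and S: "S \<in> cpow X n"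
  shows "finite S"
proof -
  have "S \<subseteq> {xs. set xs \<subseteq> (\<Union>i<n. (\<lambda>v. v ! i) ` S) \<and> length xs = n}"
  proof
    fix xs assume xs: "xs \<in> S"
    hence len: "length xs = n" using S by (simp add: cpow_def)
    have "set xs \<subseteq> (\<Union>i<n. (\<lambda>v. v ! i) ` S)"
    proof
      fix x assume "x \<in> set xs"
      then obtain i where "i < n" "x = xs ! i" using len by (auto simp: in_set_conv_nth)
      thus "x \<in> (\<Union>i<n. (\<lambda>v. v ! i) ` S)" using xs by blast
    qed
    thus "xs \<in> {xs. set xs \<subseteq> (\<Union>i<n. (\<lambda>v. v ! i) ` S) \<and> length xs = n}" using len by simp
  qed
  moreover have "finite (\<Union>i<n. (\<lambda>v. v ! i) ` S)"
  proof (rule finite_UN_I)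
    show "finite {..<n}" by simp
    fix i assume "i \<in> {..<n}"
    hence "(\<lambda>v. v ! i) ` S \<in> X" using S by (simp add: cpow_def)
    thus "finite ((\<lambda>v. v ! i) ` S)" using cx_fin[OF X] by blast
  qed
  hence "finite {xs. set xs \<subseteq> (\<Union>i<n. (\<lambda>v. v ! i) ` S) \<and> length xs = n}"
    by (rule finite_lists_length_eq)
  ultimately show "finite S" by (rule finite_subset)
qed

lemma cpow_sub:
  assumes X: "is_complex X" and S: "S \<in> cpow X n" and t: "\<tau> \<subseteq> S" "\<tau> \<noteq> {}"
  shows "\<tau> \<in> cpow X n"
proof -
  have "\<forall>v\<in>\<tau>. length v = n" using S t by (auto simp: cpow_def)
  moreover have "\<forall>i<n. (\<lambda>v. v ! i) ` \<tau> \<in> X"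
  proof (intro allI impI)
    fix i assume i: "i < n"
    have "(\<lambda>v. v ! i) ` S \<in> X" using S i by (simp add: cpow_def)
    moreover have "(\<lambda>v. v ! i) ` \<tau> \<subseteq> (\<lambda>v. v ! i) ` S" using t(1) by (rule image_mono)
    moreover have "(\<lambda>v. v ! i) ` \<tau> \<noteq> {}" using t by simp
    ultimately show "(\<lambda>v. v ! i) ` \<tau> \<in> X" by (rule cx_sub[OF X])
  qed
  ultimately show ?thesis using t by (simp add: cpow_def)
qed

lemma cpow_complex:
  assumes X: "is_complex X"
  shows "is_complex (cpow X n)"
  unfolding is_complex_def
proof (intro conjI ballI allI impI)
  fix S assume S: "S \<in> cpow X n"
  show "finite S" by (rule cpow_fin[OF X S])
  show "S \<noteq> {}" using S by (simp add: cpow_def)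
next
  fix S \<tau> assume S: "S \<in> cpow X n" and t: "\<tau> \<subseteq> S \<and> \<tau> \<noteq> {}"
  thus "\<tau> \<in> cpow X n" using cpow_sub[OF X S] by blast
qed

lemma cpow_finite:
  assumes X: "finite_complex X"
  shows "finite (cpow X n)"
proof -
  have "cpow X n \<subseteq> Pow {xs. set xs \<subseteq> vertices X \<and> length xs = n}"
  proof
    fix S assume S: "S \<in> cpow X n"
    have "S \<subseteq> {xs. set xs \<subseteq> vertices X \<and> length xs = n}"
    proof
      fix xs assume xs: "xs \<in> S"
      hence len: "length xs = n" using S by (simp add: cpow_def)
      have "set xs \<subseteq> vertices X"
      proof
        fix x assume "x \<in> set xs"
        then obtain i where i: "i < n" "x = xs ! i" using len by (auto simp: in_set_conv_nth)
        have "(\<lambda>v. v ! i) ` S \<in> X" using S i by (simp add: cpow_def)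
        moreover have "x \<in> (\<lambda>v. v ! i) ` S" using xs i by simp
        ultimately show "x \<in> vertices X" unfolding vertices_def by blast
      qed
      thus "xs \<in> {xs. set xs \<subseteq> vertices X \<and> length xs = n}" using len by simp
    qed
    thus "S \<in> Pow {xs. set xs \<subseteq> vertices X \<and> length xs = n}" by simp
  qed
  moreover have "finite {xs. set xs \<subseteq> vertices X \<and> length xs = n}"
    using X by (intro finite_lists_length_eq) (simp add: finite_complex_def)
  hence "finite (Pow {xs. set xs \<subseteq> vertices X \<and> length xs = n})" by simp
  ultimately show ?thesis by (rule finite_subset)
qed

lemma proj_simp:
  assumes "simplicial_map X Y \<phi>"
  shows "\<forall>i\<in>{..<n}. simplicial_map (cpow X n) Y (\<lambda>v. \<phi> (v ! i))"
proof (intro ballI)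
  fix i assume "i \<in> {..<n}"
  show "simplicial_map (cpow X n) Y (\<lambda>v. \<phi> (v ! i))"
    unfolding simplicial_map_def
  proof
    fix S assume S: "S \<in> cpow X n"
    hence "(\<lambda>v. v ! i) ` S \<in> X" using \<open>i \<in> {..<n}\<close> by (simp add: cpow_def)
    hence "\<phi> ` (\<lambda>v. v ! i) ` S \<in> Y" using assms by (simp add: simplicial_map_def)
    thus "(\<lambda>v. \<phi> (v ! i)) ` S \<in> Y" by (simp add: image_image)
  qed
qed

lemma class_post:
  assumes "simplicial_map Y Z \<psi>" "same_contiguity_class X Y f g"
  shows "same_contiguity_class X Z (\<lambda>v. \<psi> (f v)) (\<lambda>v. \<psi> (g v))"
proof -
  obtain h k where h: "\<forall>i\<le>k. simplicial_map X Y (h i)"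
    "\<forall>v\<in>vertices X. h 0 v = f v \<and> h k v = g v"
    "\<forall>i<k. contiguous X Y (h i) (h (Suc i))"
    using assms(2) unfolding same_contiguity_class_def by blast
  have "\<forall>i\<le>k. simplicial_map X Z (\<lambda>v. \<psi> (h i v))"
    unfolding simplicial_map_def
  proof (intro allI impI ballI)
    fix i \<sigma> assume "i \<le> k" "\<sigma> \<in> X"
    hence "h i ` \<sigma> \<in> Y" using h(1) by (simp add: simplicial_map_def)
    hence "\<psi> ` (h i ` \<sigma>) \<in> Z" using assms(1) by (simp add: simplicial_map_def)
    thus "(\<lambda>v. \<psi> (h i v)) ` \<sigma> \<in> Z" by (simp add: image_image)
  qed
  moreover have "\<forall>i<k. contiguous X Z (\<lambda>v. \<psi> (h i v)) (\<lambda>v. \<psi> (h (Suc i) v))"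
    unfolding contiguous_def
  proof (intro allI impI ballI)
    fix i \<sigma> assume "i < k" "\<sigma> \<in> X"
    hence "h i ` \<sigma> \<union> h (Suc i) ` \<sigma> \<in> Y" using h(3) by (simp add: contiguous_def)
    hence "\<psi> ` (h i ` \<sigma> \<union> h (Suc i) ` \<sigma>) \<in> Z" using assms(1) by (simp add: simplicial_map_def)
    thus "(\<lambda>v. \<psi> (h i v)) ` \<sigma> \<union> (\<lambda>v. \<psi> (h (Suc i) v)) ` \<sigma> \<in> Z"
      by (simp add: image_image image_Un)
  qed
  ultimately show ?thesis using h(2) unfolding same_contiguity_class_def
    by (intro exI[of _ "\<lambda>i v. \<psi> (h i v)"] exI[of _ k]) auto
qed

lemma class_pre:
  assumes F: "simplicial_map X Y F" and c: "same_contiguity_class Y Z f g"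
  shows "same_contiguity_class X Z (\<lambda>v. f (F v)) (\<lambda>v. g (F v))"
proof -
  obtain h k where h: "\<forall>i\<le>k. simplicial_map Y Z (h i)"
    "\<forall>v\<in>vertices Y. h 0 v = f v \<and> h k v = g v"
    "\<forall>i<k. contiguous Y Z (h i) (h (Suc i))"
    using c unfolding same_contiguity_class_def by blast
  have vv: "F v \<in> vertices Y" if "v \<in> vertices X" for v
    using that F by (auto simp: vertices_def simplicial_map_def)
  have "\<forall>i\<le>k. simplicial_map X Z (\<lambda>v. h i (F v))"
    unfolding simplicial_map_def
  proof (intro allI impI ballI)
    fix i \<sigma> assume "i \<le> k" "\<sigma> \<in> X"
    hence "h i ` (F ` \<sigma>) \<in> Z" using h(1) F by (simp add: simplicial_map_def)
    thus "(\<lambda>v. h i (F v)) ` \<sigma> \<in> Z" by (simp add: image_image)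
  qed
  moreover have "\<forall>i<k. contiguous X Z (\<lambda>v. h i (F v)) (\<lambda>v. h (Suc i) (F v))"
    unfolding contiguous_def
  proof (intro allI impI ballI)
    fix i \<sigma> assume "i < k" "\<sigma> \<in> X"
    hence "h i ` (F ` \<sigma>) \<union> h (Suc i) ` (F ` \<sigma>) \<in> Z" using h(3) F
      by (simp add: contiguous_def simplicial_map_def)
    thus "(\<lambda>v. h i (F v)) ` \<sigma> \<union> (\<lambda>v. h (Suc i) (F v)) ` \<sigma> \<in> Z"
      by (simp add: image_image)
  qed
  moreover have "\<forall>v\<in>vertices X. h 0 (F v) = f (F v) \<and> h k (F v) = g (F v)"
    using h(2) vv by blast
  ultimately show ?thesis unfolding same_contiguity_class_def
    by (intro exI[of _ "\<lambda>i v. h i (F v)"] exI[of _ k]) auto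
qed

theorem theorem5p4:
  fixes L :: "'a set set" and N :: "'b set set" and K :: "'c set set"
    and \<phi> :: "'a \<Rightarrow> 'b" and \<psi> :: "'b \<Rightarrow> 'c" and n :: nat
  assumes "finite_complex L" "edge_path_connected L"
    and "finite_complex N" "edge_path_connected N"
    and "finite_complex K" "edge_path_connected K"
    and "finite_fibration L N \<phi>" "\<phi> ` vertices L = vertices N"
    and "finite_fibration N K \<psi>" "\<psi> ` vertices N = vertices K"
    and "n \<ge> 2"
  shows "TC n L K (\<psi> \<circ> \<phi>) \<le> min (TC n L N \<phi>) (TC n N K \<psi>)"
proof -
  have Lc: "is_complex L" and Nc: "is_complex N" and Kc: "is_complex K"
    using assms(1,3,5) unfolding finite_complex_def by (blast, blast, blast)
  have sphi: "simplicial_map L N \<phi>" and spsi: "simplicial_map N K \<psi>"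
    using assms(7,9) unfolding finite_fibration_def by (blast, blast)
  define PLN where "PLN k = (\<exists>A. (\<forall>j\<le>k. subcomplex (A j) (cpow L n)) \<and> (\<Union>j\<le>k. A j) = cpow L n \<and>
      (\<forall>i\<in>{..<n}. \<forall>l\<in>{..<n}. \<forall>j\<le>k. same_contiguity_class (A j) N (\<lambda>v. \<phi> (v ! i)) (\<lambda>v. \<phi> (v ! l))))" for k :: nat
  define PNK where "PNK k = (\<exists>A. (\<forall>j\<le>k. subcomplex (A j) (cpow N n)) \<and> (\<Union>j\<le>k. A j) = cpow N n \<and>
      (\<forall>i\<in>{..<n}. \<forall>l\<in>{..<n}. \<forall>j\<le>k. same_contiguity_class (A j) K (\<lambda>v. \<psi> (v ! i)) (\<lambda>v. \<psi> (v ! l))))" for k :: nat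
  define PLK where "PLK k = (\<exists>A. (\<forall>j\<le>k. subcomplex (A j) (cpow L n)) \<and> (\<Union>j\<le>k. A j) = cpow L n \<and>
      (\<forall>i\<in>{..<n}. \<forall>l\<in>{..<n}. \<forall>j\<le>k. same_contiguity_class (A j) K (\<lambda>v. (\<psi> \<circ> \<phi>) (v ! i)) (\<lambda>v. (\<psi> \<circ> \<phi>) (v ! l))))" for k :: nat
  have T1: "TC n L N \<phi> = (LEAST k. PLN k)" unfolding TC_def SD_def PLN_def by (rule refl)
  have T2: "TC n N K \<psi> = (LEAST k. PNK k)" unfolding TC_def SD_def PNK_def by (rule refl)
  have T3: "TC n L K (\<psi> \<circ> \<phi>) = (LEAST k. PLK k)" unfolding TC_def SD_def PLK_def by (rule refl)
  have "\<exists>k. PLN k" unfolding PLN_def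
    by (rule SD_ex[OF cpow_complex[OF Lc] cpow_finite[OF assms(1)] Nc assms(4) proj_simp[OF sphi]])
  hence "PLN (LEAST k. PLN k)" by (rule LeastI_ex)
  hence "PLN (TC n L N \<phi>)" unfolding T1 .
  then obtain A where A: "\<forall>j\<le>TC n L N \<phi>. subcomplex (A j) (cpow L n)"
    "(\<Union>j\<le>TC n L N \<phi>. A j) = cpow L n"
    "\<forall>i\<in>{..<n}. \<forall>l\<in>{..<n}. \<forall>j\<le>TC n L N \<phi>. same_contiguity_class (A j) N (\<lambda>v. \<phi> (v ! i)) (\<lambda>v. \<phi> (v ! l))"
    unfolding PLN_def by (elim exE conjE) (rule that, assumption+)
  have "PLK (TC n L N \<phi>)" unfolding PLK_def o_def
  proof (intro exI[of _ A] conjI ballI allI impI)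
    fix i l j assume "i \<in> {..<n}" "l \<in> {..<n}" "j \<le> TC n L N \<phi>"
    thus "same_contiguity_class (A j) K (\<lambda>v. \<psi> (\<phi> (v ! i))) (\<lambda>v. \<psi> (\<phi> (v ! l)))"
      by (intro class_post[OF spsi]) (use A(3) in blast)
  qed (use A(1,2) in auto)
  hence le1: "TC n L K (\<psi> \<circ> \<phi>) \<le> TC n L N \<phi>" unfolding T3 by (rule Least_le)
  have "\<exists>k. PNK k" unfolding PNK_def
    by (rule SD_ex[OF cpow_complex[OF Nc] cpow_finite[OF assms(3)] Kc assms(6) proj_simp[OF spsi]])
  hence "PNK (LEAST k. PNK k)" by (rule LeastI_ex)
  hence "PNK (TC n N K \<psi>)" unfolding T2 .
  then obtain B where B: "\<forall>j\<le>TC n N K \<psi>. subcomplex (B j) (cpow N n)"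
    "(\<Union>j\<le>TC n N K \<psi>. B j) = cpow N n"
    "\<forall>i\<in>{..<n}. \<forall>l\<in>{..<n}. \<forall>j\<le>TC n N K \<psi>. same_contiguity_class (B j) K (\<lambda>v. \<psi> (v ! i)) (\<lambda>v. \<psi> (v ! l))"
    unfolding PNK_def by (elim exE conjE) (rule that, assumption+)
  define k where "k = TC n N K \<psi>"
  define A' where "A' j = {S \<in> cpow L n. map \<phi> ` S \<in> B j}" for j
  have mapS: "map \<phi> ` S \<in> cpow N n" if S: "S \<in> cpow L n" for S
  proof -
    have len: "\<forall>v\<in>S. length v = n" using S by (simp add: cpow_def)
    have "(\<lambda>v. v ! i) ` map \<phi> ` S \<in> N" if i: "i < n" for i
    proof -
      have "(\<lambda>v. v ! i) ` map \<phi> ` S = (\<lambda>v. \<phi> (v ! i)) ` S"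
        unfolding image_image using len i by (intro image_cong) auto
      also have "\<dots> = \<phi> ` (\<lambda>v. v ! i) ` S" by (simp add: image_image)
      finally have e: "(\<lambda>v. v ! i) ` map \<phi> ` S = \<phi> ` (\<lambda>v. v ! i) ` S" .
      have "(\<lambda>v. v ! i) ` S \<in> L" using S i by (simp add: cpow_def)
      hence "\<phi> ` (\<lambda>v. v ! i) ` S \<in> N" using sphi by (simp add: simplicial_map_def)
      thus ?thesis using e by simp
    qed
    moreover have "map \<phi> ` S \<noteq> {}" using S by (simp add: cpow_def)
    moreover have "\<forall>v\<in>map \<phi> ` S. length v = n" using len by simp
    ultimately show ?thesis unfolding cpow_def by blast
  qed
  have Aj: "S \<in> A' j \<longleftrightarrow> S \<in> cpow L n \<and> map \<phi> ` S \<in> B j" for S j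
    unfolding A'_def by (rule mem_Collect_eq)
  have sub1: "subcomplex (A' j) (cpow L n)" if jk: "j \<le> k" for j
  proof -
    have "j \<le> TC n N K \<psi>" using jk unfolding k_def .
    hence "subcomplex (B j) (cpow N n)" using B(1) by blast
    hence Bj: "is_complex (B j)" unfolding subcomplex_def by (rule conjunct1)
    have "is_complex (A' j)" unfolding is_complex_def
    proof (intro conjI ballI allI impI)
      fix S assume "S \<in> A' j"
      hence S: "S \<in> cpow L n" using Aj by blast
      show "finite S" by (rule cpow_fin[OF Lc S])
      show "S \<noteq> {}" using S unfolding cpow_def by blast
    next
      fix S \<tau> assume S: "S \<in> A' j" and t: "\<tau> \<subseteq> S \<and> \<tau> \<noteq> {}"
      have S1: "S \<in> cpow L n" and S2: "map \<phi> ` S \<in> B j" using S Aj by blast+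
      have "\<tau> \<in> cpow L n" using cpow_sub[OF Lc S1] t by blast
      moreover have "map \<phi> ` \<tau> \<in> B j"
      proof (rule cx_sub[OF Bj S2])
        show "map \<phi> ` \<tau> \<subseteq> map \<phi> ` S" using t by (intro image_mono) blast
        show "map \<phi> ` \<tau> \<noteq> {}" using t by blast
      qed
      ultimately show "\<tau> \<in> A' j" using Aj by blast
    qed
    moreover have "A' j \<subseteq> cpow L n" using Aj by blast
    ultimately show ?thesis unfolding subcomplex_def by (rule conjI)
  qed
  have un: "(\<Union>j\<le>k. A' j) = cpow L n"
  proof
    show "(\<Union>j\<le>k. A' j) \<subseteq> cpow L n" using Aj by blast
    show "cpow L n \<subseteq> (\<Union>j\<le>k. A' j)"
    proof
      fix S assume S: "S \<in> cpow L n"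
      have "map \<phi> ` S \<in> (\<Union>j\<le>k. B j)" using mapS[OF S] B(2) unfolding k_def by simp
      then obtain j where "j \<le> k" "map \<phi> ` S \<in> B j" by blast
      thus "S \<in> (\<Union>j\<le>k. A' j)" using S Aj by blast
    qed
  qed
  have cl: "same_contiguity_class (A' j) K (\<lambda>v. (\<psi> \<circ> \<phi>) (v ! i)) (\<lambda>v. (\<psi> \<circ> \<phi>) (v ! l))"
    if il: "i < n" "l < n" and jk: "j \<le> k" for i l j
  proof -
    have sm: "simplicial_map (A' j) (B j) (map \<phi>)" unfolding simplicial_map_def using Aj by blast
    have "j \<le> TC n N K \<psi>" using jk unfolding k_def .
    hence "same_contiguity_class (B j) K (\<lambda>v. \<psi> (v ! i)) (\<lambda>v. \<psi> (v ! l))"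
      using B(3) il by blast
    hence c0: "same_contiguity_class (A' j) K (\<lambda>v. \<psi> (map \<phi> v ! i)) (\<lambda>v. \<psi> (map \<phi> v ! l))"
      by (rule class_pre[OF sm])
    have len: "length v = n" if vA: "v \<in> vertices (A' j)" for v
    proof -
      obtain S where "S \<in> A' j" "v \<in> S" using vA unfolding vertices_def by blast
      hence "S \<in> cpow L n" "v \<in> S" using Aj by blast+
      thus ?thesis unfolding cpow_def by blast
    qed
    show ?thesis
    proof (rule class_cong[OF c0])
      show "\<forall>v\<in>vertices (A' j). \<psi> (map \<phi> v ! i) = (\<psi> \<circ> \<phi>) (v ! i)"
        using len il by simp
      show "\<forall>v\<in>vertices (A' j). \<psi> (map \<phi> v ! l) = (\<psi> \<circ> \<phi>) (v ! l)"
        using len il by simp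
    qed
  qed
  have "PLK k" unfolding PLK_def
  proof (intro exI[of _ A'] conjI allI impI ballI)
    show "\<And>j. j \<le> k \<Longrightarrow> subcomplex (A' j) (cpow L n)" by (rule sub1)
    show "(\<Union>j\<le>k. A' j) = cpow L n" by (rule un)
    show "\<And>i l j. i \<in> {..<n} \<Longrightarrow> l \<in> {..<n} \<Longrightarrow> j \<le> k \<Longrightarrow>
      same_contiguity_class (A' j) K (\<lambda>v. (\<psi> \<circ> \<phi>) (v ! i)) (\<lambda>v. (\<psi> \<circ> \<phi>) (v ! l))"
      using cl by blast
  qed
  hence le2: "TC n L K (\<psi> \<circ> \<phi>) \<le> TC n N K \<psi>" unfolding T3 k_def by (rule Least_le)
  show ?thesis using le1 le2 by simp
qed

end
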